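(* Let $D$ be a non-zero square-free integer and $E: y^2=x^3+D$. Let $Q\in E(\mathbb{Q})$ with $2Q$ not the identity and $Q$ not the identity, and set $P=2Q$. Suppose that $B_Q$ is even, that $3\nmid C_Q$, and that $B_P$ is an $l$th power of an integer for some prime $l$. Then $|C_Q|$ and $2B_Q$ are both $l$th powers of integers.
   Context: For a point $R\in E(\mathbb{Q})$ different from the identity write $x(R)=A_R/B_R^2$, $y(R)=C_R/B_R^3$ with $A_R,B_R,C_R\in\mathbb{Z}$, $B_R>0$ and $\gcd(A_RC_R,B_R)=1$. *)

theory Defs
  imports Complex_Main "HOL-Computational_Algebra.Squarefree"
begin

text \<open>Affine rational points of E: y^2 = x^3 + D (the identity is the point at infinity).\<close>
definition on_curve :: "int \<Rightarrow> rat \<Rightarrow> rat \<Rightarrow> bool" where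
  "on_curve D x y \<longleftrightarrow> y^2 = x^3 + of_int D"

text \<open>Doubling of an affine point (x,y) with y \<noteq> 0 on y^2 = x^3 + D (tangent slope 3x^2/(2y)).\<close>
definition dbl_x :: "rat \<Rightarrow> rat \<Rightarrow> rat" where
  "dbl_x x y = (3 * x^2 / (2 * y))^2 - 2 * x"

definition dbl_y :: "rat \<Rightarrow> rat \<Rightarrow> rat" where
  "dbl_y x y = (3 * x^2 / (2 * y)) * (x - dbl_x x y) - y"

definition is_rep :: "rat \<Rightarrow> rat \<Rightarrow> int \<Rightarrow> int \<Rightarrow> int \<Rightarrow> bool" where
  "is_rep x y A B C \<longleftrightarrow> x = of_int A / of_int (B^2) \<and> y = of_int C / of_int (B^3)
     \<and> B > 0 \<and> gcd (A * C) B = 1"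

end

theory Submission
  imports Defs "HOL-Computational_Algebra.Nth_Powers"
begin

lemma int_pow_coprime:
  fixes a b m :: int and l :: nat
  assumes "a > 0" "b > 0" "coprime a b" "a * b = m ^ l"
  shows "\<exists>u::int. a = u ^ l"
proof -
  have "a * b = \<bar>m\<bar> ^ l"
    using assms by (metis abs_of_pos mult_pos_pos power_abs)
  hence "nat (a * b) = nat \<bar>m\<bar> ^ l" by (simp add: nat_power_eq)
  hence "nat a * nat b = nat \<bar>m\<bar> ^ l" using assms by (metis nat_mult_distrib order_less_imp_le)
  hence "is_nth_power l (nat a * nat b)" by auto
  moreover have "coprime (nat a) (nat b)"
    using assms by (metis abs_of_pos coprime_nat_abs_left_iff coprime_nat_abs_right_iff nat_0_le order_less_imp_le)
  ultimately have "is_nth_power l (nat a)"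
    using is_nth_power_mult_coprime_natD(1)[of "nat a" "nat b" l] assms by auto
  then obtain u where "nat a = u ^ l" by (auto elim: is_nth_powerE)
  hence "int (nat a) = int u ^ l" by simp
  hence "a = int u ^ l" using assms by simp
  thus ?thesis by blast
qed

theorem mainTheorem9:
  fixes D :: int and xQ yQ :: rat and AQ BQ CQ AP BP CP :: int and l :: nat
  assumes "D \<noteq> 0" and "squarefree D"
    and "on_curve D xQ yQ"
    and "yQ \<noteq> 0"
    and "is_rep xQ yQ AQ BQ CQ"
    and "is_rep (dbl_x xQ yQ) (dbl_y xQ yQ) AP BP CP"
    and "even BQ" and "\<not> 3 dvd CQ"
    and "prime l" and "\<exists>m::int. BP = m ^ l"
  shows "(\<exists>m::int. \<bar>CQ\<bar> = m ^ l) \<and> (\<exists>m::int. 2 * BQ = m ^ l)"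
proof -
  define A where "A = AQ"
  define B where "B = BQ"
  define C where "C = CQ"
  have x: "xQ = of_int A / of_int (B^2)" and y: "yQ = of_int C / of_int (B^3)"
    and Bpos: "B > 0" and g: "gcd (A * C) B = 1"
    using assms(5) unfolding is_rep_def A_def B_def C_def by auto
  have C0: "C \<noteq> 0" using y assms(4) by auto
  have cAB: "coprime A B" and cCB: "coprime C B" using g
    by (simp_all add: coprime_iff_gcd_eq_1[symmetric] coprime_mult_left_iff)
  have curve: "C^2 = A^3 + D * B^6"
  proof -
    have "(of_int C / of_int (B^3))^2 = (of_int A / of_int (B^2))^3 + (of_int D :: rat)"
      using assms(3) x y unfolding on_curve_def by simp
    hence "(of_int C :: rat)^2 = of_int A ^3 + of_int D * of_int B ^ 6"
      using Bpos by (simp add: field_simps power_divide flip: power_mult)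
    hence "(of_int (C^2) :: rat) = of_int (A^3 + D * B^6)" by simp
    thus ?thesis using of_int_eq_iff by blast
  qed
  define N where "N = A * (9 * A^3 - 8 * C^2)"
  define M where "M = 2 * B * C"
  have M0: "M \<noteq> 0" using C0 Bpos M_def by auto
  have dx: "dbl_x xQ yQ = of_int N / of_int (M^2)"
    unfolding dbl_x_def x y N_def M_def using Bpos C0
    by (simp add: field_simps power2_eq_square power3_eq_cube)
  have oddA: "odd A"
  proof
    assume e: "even A"
    have "2 dvd B" using assms(7) B_def by simp
    from coprime_common_divisor[OF cAB e this] show False by simp
  qed
  have oddC: "odd C"
  proof
    assume e: "even C"
    have "2 dvd B" using assms(7) B_def by simp
    from coprime_common_divisor[OF cCB e this] show False by simp
  qed
  have cN2: "coprime N 2" using oddA unfolding N_def by (simp add: coprime_commute)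
  have e1: "9 * A^3 - 8 * C^2 = (-8*D*B^5) * B + A^3" using curve by algebra
  have "gcd B (9 * A^3 - 8 * C^2) = gcd B (A^3)" unfolding e1 by (rule gcd_add_mult)
  also have "\<dots> = 1" using cAB by (simp add: coprime_commute coprime_iff_gcd_eq_1[symmetric])
  finally have c1: "coprime (9 * A^3 - 8 * C^2) B"
    by (simp add: coprime_commute coprime_iff_gcd_eq_1[symmetric])
  have cNB: "coprime N B" using c1 cAB unfolding N_def by simp
  have cAC: "coprime A C"
  proof -
    define g where "g = gcd A C"
    have "g^2 dvd C^2" "g^3 dvd A^3" unfolding g_def by (simp_all add: dvd_power_same)
    moreover have "g^2 dvd g^3" by (rule le_imp_power_dvd) simp
    ultimately have "g^2 dvd A^3" using dvd_trans by blast
    hence "g^2 dvd D * B^6" using \<open>g^2 dvd C^2\<close> curve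
      by (metis add_diff_cancel_left' dvd_diff)
    moreover have "coprime (g^2) (B^6)"
      using coprime_divisors[OF gcd_dvd1 dvd_refl cAB, of C] unfolding g_def by simp
    ultimately have "g^2 dvd D" by (simp add: coprime_dvd_mult_left_iff)
    hence "is_unit g" using assms(2) unfolding squarefree_def by blast
    thus ?thesis unfolding g_def by (simp add: coprime_iff_gcd_eq_1)
  qed
  have c3: "coprime 3 C" using assms(8) C_def by (simp add: prime_imp_coprime)
  have e2: "9 * A^3 - 8 * C^2 = (-8*C) * C + 9 * A^3" by algebra
  have "gcd C (9 * A^3 - 8 * C^2) = gcd C (9 * A^3)" unfolding e2 by (rule gcd_add_mult)
  also have "\<dots> = 1"
  proof -
    have "coprime ((3::int)^2) C" using c3 by (simp only: coprime_power_left_iff) simp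
    hence "coprime (9 * A^3) C" using cAC by simp
    thus ?thesis by (simp add: coprime_commute coprime_iff_gcd_eq_1[symmetric])
  qed
  finally have c2: "coprime (9 * A^3 - 8 * C^2) C"
    by (simp add: coprime_commute coprime_iff_gcd_eq_1[symmetric])
  have cNC: "coprime N C" using c2 cAC unfolding N_def by simp
  have cNM: "coprime N (M^2)" using cN2 cNB cNC unfolding M_def by simp
  have xP: "dbl_x xQ yQ = of_int AP / of_int (BP^2)" and BPpos: "BP > 0"
    and gP: "gcd (AP * CP) BP = 1"
    using assms(6) unfolding is_rep_def by auto
  have cAP: "coprime AP BP" using gP
    by (simp add: coprime_iff_gcd_eq_1[symmetric] coprime_mult_left_iff)
  have "(of_int AP / of_int (BP^2) :: rat) = of_int N / of_int (M^2)" using xP dx by simp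
  hence "(of_int (AP * M^2) :: rat) = of_int (N * BP^2)" using M0 BPpos
    by (simp add: field_simps)
  hence eq: "AP * M^2 = N * BP^2" using of_int_eq_iff by blast
  have "BP^2 dvd AP * M^2" using eq by simp
  moreover have "coprime (BP^2) AP" using cAP by (simp add: coprime_commute)
  ultimately have d1: "BP^2 dvd M^2" by (simp add: coprime_dvd_mult_right_iff)
  have "M^2 dvd N * BP^2" using eq by (metis dvd_triv_right)
  moreover have "coprime (M^2) N" using cNM by (simp add: coprime_commute)
  ultimately have d2: "M^2 dvd BP^2" by (simp add: coprime_dvd_mult_right_iff)
  have "BP^2 = M^2" using d1 d2 by (simp add: zdvd_antisym_nonneg)
  hence "BP^2 = \<bar>M\<bar>^2" by simp
  hence BPM: "BP = \<bar>M\<bar>" using BPpos power2_eq_iff_nonneg[of BP "\<bar>M\<bar>"] by simp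
  have BPprod: "BP = (2 * B) * \<bar>C\<bar>" using BPM Bpos unfolding M_def by (simp add: abs_mult)
  have cop: "coprime (2 * B) \<bar>C\<bar>" using oddC cCB by (simp add: coprime_commute)
  obtain m where m: "BP = m ^ l" using assms(10) by blast
  have p1: "2 * B > 0" "\<bar>C\<bar> > 0" using Bpos C0 by auto
  have "\<exists>u::int. 2 * B = u ^ l" using int_pow_coprime[OF p1 cop, of m l] BPprod m by simp
  moreover have "\<exists>u::int. \<bar>C\<bar> = u ^ l"
    using int_pow_coprime[of "\<bar>C\<bar>" "2 * B" m l] p1 cop BPprod m
    by (simp add: coprime_commute mult.commute)
  ultimately show ?thesis unfolding B_def C_def by blast
qed

end
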